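(* Let $q>1$ be real. Then: (i) for each $r\in(1,q)$, the set $$G_{r,q}:=\Bigl\{\sum_{i=1}^\infty \frac{b_i(x,r)}{q^i}: x\in J_r\Bigr\}$$ has Hausdorff dimension $\log r/\log q$; (ii) the set $G_q:=\bigcup_{r\in(1,q)}G_{r,q}$ is of first category, has Lebesgue measure zero and has Hausdorff dimension one.
   Context: For real $p>1$ let $\lceil p\rceil$ be the smallest integer $\ge p$, $A_p=\{0,\ldots,\lceil p\rceil-1\}$ and $J_p=[0,(\lceil p\rceil-1)/(p-1)]$. For $x\in J_p$ the greedy expansion $(b_i(x,p))$ of $x$ in base $p$ is defined recursively: $b_n(x,p)$ is the largest element of $A_p$ with $\sum_{i=1}^n b_i(x,p)p^{-i}\le x$; it satisfies $x=\sum_i b_i(x,p)p^{-i}$. *)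

theory Defs
  imports "HOL-Analysis.Analysis"
begin

definition greedy_interval :: "real \<Rightarrow> real set" where
  "greedy_interval p = {0 .. (real_of_int \<lceil>p\<rceil> - 1) / (p - 1)}"

text \<open>greedy_psum p x n = sum_{i=1}^n b_i(x,p) p^{-i}\<close>
fun greedy_psum :: "real \<Rightarrow> real \<Rightarrow> nat \<Rightarrow> real" where
  "greedy_psum p x 0 = 0"
| "greedy_psum p x (Suc n) = greedy_psum p x n +
     real (GREATEST d. d \<le> nat \<lceil>p\<rceil> - 1 \<and> greedy_psum p x n + real d / p ^ Suc n \<le> x) / p ^ Suc n"

text \<open>greedy_digit p x n = b_n(x,p), for n \<ge> 1 (the value at n = 0 is irrelevant)\<close>
definition greedy_digit :: "real \<Rightarrow> real \<Rightarrow> nat \<Rightarrow> nat" where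
  "greedy_digit p x n =
     (GREATEST d. d \<le> nat \<lceil>p\<rceil> - 1 \<and> greedy_psum p x (n - 1) + real d / p ^ n \<le> x)"

definition G_set :: "real \<Rightarrow> real \<Rightarrow> real set" where
  "G_set r q = (\<lambda>x. \<Sum>i. real (greedy_digit r x (Suc i)) / q ^ Suc i) ` greedy_interval r"

definition hausdorff_content :: "real \<Rightarrow> real \<Rightarrow> 'a::metric_space set \<Rightarrow> ennreal" where
  "hausdorff_content s \<delta> A =
     (INF U \<in> {U :: nat \<Rightarrow> 'a set. A \<subseteq> (\<Union>i. U i) \<and> (\<forall>i. bounded (U i) \<and> diameter (U i) \<le> \<delta>)}.
        \<Sum>i. ennreal (diameter (U i) powr s))"

definition hausdorff_measure :: "real \<Rightarrow> 'a::metric_space set \<Rightarrow> ennreal" where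
  "hausdorff_measure s A = (SUP \<delta> \<in> {0<..}. hausdorff_content s \<delta> A)"

definition hausdorff_dim :: "'a::metric_space set \<Rightarrow> ereal" where
  "hausdorff_dim A = Inf {ereal s | s. 0 \<le> s \<and> hausdorff_measure s A = 0}"

definition nowhere_dense :: "'a::topological_space set \<Rightarrow> bool" where
  "nowhere_dense S \<longleftrightarrow> interior (closure S) = {}"

definition first_category :: "'a::topological_space set \<Rightarrow> bool" where
  "first_category A \<longleftrightarrow> (\<exists>F. countable F \<and> (\<forall>S\<in>F. nowhere_dense S) \<and> A = \<Union>F)"

end

theory Submission
  imports Defs
begin


definition cd :: "real \<Rightarrow> nat" where "cd r = nat \<lceil>r\<rceil> - 1"
definition dg :: "real \<Rightarrow> real \<Rightarrow> nat \<Rightarrow> nat" where "dg r x i = greedy_digit r x (Suc i)"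

lemma psum_eq: "greedy_psum r x n = (\<Sum>i<n. real (dg r x i) / r ^ Suc i)"
  by (induction n) (simp_all add: dg_def greedy_digit_def)

lemma psum_Suc: "greedy_psum r x (Suc n) = greedy_psum r x n + real (dg r x n) / r ^ Suc n"
  by (simp add: dg_def greedy_digit_def)

lemma greedy_step:
  assumes "greedy_psum r x n \<le> x"
  shows "dg r x n \<le> cd r" "greedy_psum r x (Suc n) \<le> x"
    "dg r x n < cd r \<Longrightarrow> x < greedy_psum r x (Suc n) + 1 / r ^ Suc n"
proof -
  define Q where "Q = (\<lambda>d::nat. d \<le> nat \<lceil>r\<rceil> - 1 \<and> greedy_psum r x n + real d / r ^ Suc n \<le> x)"
  have Q0: "Q 0" using assms by (simp add: Q_def)
  have bd: "\<And>y. Q y \<Longrightarrow> y \<le> nat \<lceil>r\<rceil> - 1" by (simp add: Q_def)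
  have dgQ: "dg r x n = Greatest Q" by (simp add: dg_def greedy_digit_def Q_def)
  have QG: "Q (Greatest Q)" by (rule GreatestI_nat[where P=Q, OF Q0 bd])
  then show "dg r x n \<le> cd r" by (simp add: dgQ Q_def cd_def)
  show "greedy_psum r x (Suc n) \<le> x" using QG unfolding psum_Suc by (simp add: Q_def dgQ)
  assume lt: "dg r x n < cd r"
  have "\<not> Q (Suc (Greatest Q))"
  proof
    assume "Q (Suc (Greatest Q))"
    then have "Suc (Greatest Q) \<le> Greatest Q" by (rule Greatest_le_nat[where P=Q, OF _ bd])
    then show False by simp
  qed
  then have "\<not> (greedy_psum r x n + real (Suc (dg r x n)) / r ^ Suc n \<le> x)"
    using lt by (simp add: Q_def dgQ cd_def)
  then show "x < greedy_psum r x (Suc n) + 1 / r ^ Suc n"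
    unfolding psum_Suc by (simp add: add_divide_distrib algebra_simps)
qed

lemma psum_le: assumes "0 \<le> x" shows "greedy_psum r x n \<le> x"
proof (induction n)
  case 0 then show ?case using assms by simp
next
  case (Suc n) then show ?case by (rule greedy_step(2))
qed

lemma dg_le: "0 \<le> x \<Longrightarrow> dg r x n \<le> cd r"
  using greedy_step(1)[OF psum_le] .

lemma dg_lt: "0 \<le> x \<Longrightarrow> dg r x n < cd r \<Longrightarrow> x < greedy_psum r x (Suc n) + 1 / r ^ Suc n"
  using greedy_step(3)[OF psum_le] .

lemma cd_real: "1 < r \<Longrightarrow> real (cd r) = of_int \<lceil>r\<rceil> - 1"
proof -
  assume "1 < r"
  then have "\<lceil>r\<rceil> \<ge> 2" by linarith
  then have "nat \<lceil>r\<rceil> \<ge> 1" by linarith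
  then have "real (nat \<lceil>r\<rceil> - 1) = real (nat \<lceil>r\<rceil>) - 1" by (simp add: of_nat_diff)
  also have "real (nat \<lceil>r\<rceil>) = of_int \<lceil>r\<rceil>" using \<open>\<lceil>r\<rceil> \<ge> 2\<close> by simp
  finally show ?thesis unfolding cd_def .
qed

lemma cd_ge: "1 < r \<Longrightarrow> r - 1 \<le> real (cd r)"
  using cd_real[of r] by linarith

lemma cd_ge1: assumes "1 < r" shows "1 \<le> cd r"
proof -
  have "\<lceil>r\<rceil> \<ge> 2" using assms by linarith
  then have "real (cd r) \<ge> 1" using cd_real[OF assms] by linarith
  then show ?thesis by simp
qed

lemma tail_bound:
  assumes r: "1 < r" and x: "0 \<le> x" "x \<le> real (cd r) / (r - 1)"
  shows "x - greedy_psum r x n \<le> (real (cd r) / (r - 1)) / r ^ n"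
proof (induction n)
  case 0 then show ?case using x by simp
next
  case (Suc n)
  define M where "M = real (cd r) / (r - 1)"
  have M1: "1 \<le> M" using cd_ge[OF r] r unfolding M_def by (simp add: field_simps)
  have rM: "r * M - real (cd r) = M" using r unfolding M_def by (simp add: field_simps)
  have rp: "0 < r ^ n" using r by simp
  show ?case
  proof (cases "dg r x n < cd r")
    case True
    have "x - greedy_psum r x (Suc n) < 1 / r ^ Suc n" using dg_lt[OF x(1) True] by simp
    also have "\<dots> \<le> M / r ^ Suc n" using M1 r by (simp add: divide_right_mono)
    finally show ?thesis unfolding M_def by simp
  next
    case False
    then have d: "dg r x n = cd r" using dg_le[OF x(1), of r n] by simp
    have "x - greedy_psum r x (Suc n) = (x - greedy_psum r x n) - real (cd r) / r ^ Suc n"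
      unfolding psum_Suc d by simp
    also have "\<dots> \<le> M / r ^ n - real (cd r) / r ^ Suc n" using Suc unfolding M_def by simp
    also have "\<dots> = (r * M - real (cd r)) / r ^ Suc n" using r by (simp add: field_simps)
    also have "\<dots> = M / r ^ Suc n" using rM by simp
    finally show ?thesis unfolding M_def .
  qed
qed

lemma psum_diff: "k < m \<Longrightarrow> greedy_psum r x m - greedy_psum r x (Suc k) = (\<Sum>i\<in>{k<..<m}. real (dg r x i) / r ^ Suc i)"
proof (induction m)
  case 0 then show ?case by simp
next
  case (Suc m)
  show ?case
  proof (cases "k < m")
    case True
    have e: "{k<..<Suc m} = insert m {k<..<m}" using True by auto
    show ?thesis unfolding e using Suc True by (simp add: psum_Suc del: greedy_psum.simps)
  next
    case False
    then have "m = k" using Suc by simp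
    then have "{k<..<Suc m} = {}" by auto
    then show ?thesis using \<open>m = k\<close> by simp
  qed
qed

lemma good:
  assumes r: "1 < r" and x: "0 \<le> x" and rb: "r \<le> b" and km: "k < m" and lt: "dg r x k < cd r"
  shows "(\<Sum>i\<in>{k<..<m}. real (dg r x i) / b ^ (i - k)) \<le> r / b"
proof -
  define T where "T = (\<Sum>i\<in>{k<..<m}. real (dg r x i) / r ^ (i - k))"
  have "T = r ^ Suc k * (\<Sum>i\<in>{k<..<m}. real (dg r x i) / r ^ Suc i)"
    unfolding T_def sum_distrib_left
  proof (rule sum.cong[OF refl])
    fix i assume "i \<in> {k<..<m}"
    then have "Suc i = (i - k) + Suc k" by auto
    then have "r ^ Suc i = r ^ (i - k) * r ^ Suc k" by (metis power_add)
    then show "real (dg r x i) / r ^ (i - k) = r ^ Suc k * (real (dg r x i) / r ^ Suc i)"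
      using r by (simp add: field_simps)
  qed
  also have "\<dots> = r ^ Suc k * (greedy_psum r x m - greedy_psum r x (Suc k))"
    using psum_diff[OF km] by simp
  also have "\<dots> \<le> r ^ Suc k * (x - greedy_psum r x (Suc k))"
    using psum_le[OF x, of r m] r by (intro mult_left_mono) auto
  also have "\<dots> < r ^ Suc k * (1 / r ^ Suc k)"
    using dg_lt[OF x lt] r by (intro mult_strict_left_mono) auto
  also have "\<dots> = 1" using r by simp
  finally have T1: "T < 1" .
  have "(\<Sum>i\<in>{k<..<m}. real (dg r x i) / b ^ (i - k)) \<le> (\<Sum>i\<in>{k<..<m}. (r / b) * (real (dg r x i) / r ^ (i - k)))"
  proof (rule sum_mono)
    fix i assume i: "i \<in> {k<..<m}"
    then have i1: "1 \<le> i - k" by auto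
    have rb1: "r / b \<le> 1" "0 \<le> r / b" using rb r by auto
    have "(r / b) ^ (i - k) \<le> (r / b) ^ 1" using power_decreasing[OF i1 rb1(2) rb1(1)] .
    then have "(r / b) ^ (i - k) \<le> r / b" by simp
    moreover have "real (dg r x i) / b ^ (i - k) = (real (dg r x i) / r ^ (i - k)) * (r / b) ^ (i - k)"
      using r rb by (simp add: power_divide)
    moreover have "0 \<le> real (dg r x i) / r ^ (i - k)" using r by simp
    ultimately show "real (dg r x i) / b ^ (i - k) \<le> (r / b) * (real (dg r x i) / r ^ (i - k))"
      by (metis mult.commute mult_left_mono)
  qed
  also have "\<dots> = (r / b) * T" unfolding T_def sum_distrib_left ..
  also have "\<dots> \<le> r / b"
  proof -
    have "r * T \<le> r" using T1 r by (simp add: mult_left_le)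
    then show ?thesis using r rb by (simp add: divide_right_mono)
  qed
  finally show ?thesis .
qed

lemma sum_split3:
  fixes f :: "nat \<Rightarrow> real"
  shows "k < m \<Longrightarrow> (\<Sum>i<m. f i) = (\<Sum>i<k. f i) + f k + (\<Sum>i\<in>{k<..<m}. f i)"
proof (induction m)
  case 0 then show ?case by simp
next
  case (Suc m)
  show ?case
  proof (cases "k < m")
    case True
    have e: "{k<..<Suc m} = insert m {k<..<m}" using True by auto
    show ?thesis unfolding e using Suc True by simp
  next
    case False
    then have "m = k" using Suc by simp
    then have "{k<..<Suc m} = {}" by auto
    then show ?thesis using \<open>m = k\<close> by simp
  qed
qed

lemma sep_words:
  fixes u v :: "nat \<Rightarrow> nat" and b \<rho> :: real
  assumes b: "1 < b" and km: "k < m" and eq: "\<forall>i<k. u i = v i" and lt: "u k < v k"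
    and good: "(\<Sum>i\<in>{k<..<m}. real (u i) / b ^ (i - k)) \<le> \<rho>"
  shows "(1 - \<rho>) / b ^ Suc k \<le> (\<Sum>i<m. real (v i) / b ^ Suc i) - (\<Sum>i<m. real (u i) / b ^ Suc i)"
proof -
  have A: "(\<Sum>i<k. real (u i) / b ^ Suc i) = (\<Sum>i<k. real (v i) / b ^ Suc i)"
    using eq by (intro sum.cong) auto
  have Ut: "(\<Sum>i\<in>{k<..<m}. real (u i) / b ^ Suc i) = (1 / b ^ Suc k) * (\<Sum>i\<in>{k<..<m}. real (u i) / b ^ (i - k))"
    unfolding sum_distrib_left
  proof (rule sum.cong[OF refl])
    fix i assume "i \<in> {k<..<m}"
    then have "Suc i = (i - k) + Suc k" by auto
    then have "b ^ Suc i = b ^ (i - k) * b ^ Suc k" by (metis power_add)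
    then show "real (u i) / b ^ Suc i = 1 / b ^ Suc k * (real (u i) / b ^ (i - k))"
      using b by (simp add: field_simps)
  qed
  have Ut2: "(\<Sum>i\<in>{k<..<m}. real (u i) / b ^ Suc i) \<le> \<rho> / b ^ Suc k"
    unfolding Ut using good b by (simp add: divide_right_mono)
  have Vt: "0 \<le> (\<Sum>i\<in>{k<..<m}. real (v i) / b ^ Suc i)" using b by (intro sum_nonneg) auto
  have mid: "real (u k) / b ^ Suc k + 1 / b ^ Suc k \<le> real (v k) / b ^ Suc k"
    using lt b by (simp add: add_divide_distrib[symmetric] divide_right_mono)
  show ?thesis
    unfolding sum_split3[OF km, of "\<lambda>i. real (v i) / b ^ Suc i"] sum_split3[OF km, of "\<lambda>i. real (u i) / b ^ Suc i"] A
    using Ut2 Vt mid by (simp add: diff_divide_distrib)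
qed

definition V :: "real \<Rightarrow> real \<Rightarrow> real \<Rightarrow> nat \<Rightarrow> real" where
  "V b r x m = (\<Sum>i<m. real (dg r x i) / b ^ Suc i)"

lemma sep_pts_k:
  assumes r1: "1 < r1" and r2: "1 < r2" and c: "cd r1 = cd r2" and x: "0 \<le> x" and y: "0 \<le> y"
    and t: "r1 \<le> t" and tb: "t \<le> b"
    and km: "k < m" and eq: "\<forall>i<k. dg r1 x i = dg r2 y i" and lt: "dg r1 x k < dg r2 y k"
  shows "(1 - t / b) / b ^ Suc k \<le> V b r2 y m - V b r1 x m"
proof -
  have b: "1 < b" using r1 t tb by simp
  have "dg r1 x k < cd r1" using lt dg_le[OF y, of r2 k] c by simp
  then have g: "(\<Sum>i\<in>{k<..<m}. real (dg r1 x i) / b ^ (i - k)) \<le> r1 / b"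
    using good[OF r1 x _ km] t tb by simp
  also have "\<dots> \<le> t / b" using t b by (simp add: divide_right_mono)
  finally show ?thesis unfolding V_def by (rule sep_words[OF b km eq lt])
qed

lemma sep_pts:
  assumes r1: "1 < r1" and r2: "1 < r2" and c: "cd r1 = cd r2" and x: "0 \<le> x" and y: "0 \<le> y"
    and t1: "r1 \<le> t" and t2: "r2 \<le> t" and tb: "t \<le> b"
    and ex: "\<exists>i<m. dg r1 x i \<noteq> dg r2 y i"
  shows "\<exists>k<m. (\<forall>i<k. dg r1 x i = dg r2 y i) \<and> dg r1 x k \<noteq> dg r2 y k \<and>
      (\<forall>M. k < M \<longrightarrow> (1 - t / b) / b ^ Suc k \<le> \<bar>V b r2 y M - V b r1 x M\<bar>)"
proof -
  define k where "k = (LEAST i. dg r1 x i \<noteq> dg r2 y i)"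
  obtain i where i: "i < m" "dg r1 x i \<noteq> dg r2 y i" using ex by blast
  have kd: "dg r1 x k \<noteq> dg r2 y k" unfolding k_def using i(2) by (rule LeastI)
  have ki: "k \<le> i" unfolding k_def using i(2) by (rule Least_le)
  have eq: "\<forall>j<k. dg r1 x j = dg r2 y j" unfolding k_def using not_less_Least by blast
  have "\<forall>M. k < M \<longrightarrow> (1 - t / b) / b ^ Suc k \<le> \<bar>V b r2 y M - V b r1 x M\<bar>"
  proof (intro allI impI)
    fix M assume kM: "k < M"
    show "(1 - t / b) / b ^ Suc k \<le> \<bar>V b r2 y M - V b r1 x M\<bar>"
    proof (cases "dg r1 x k < dg r2 y k")
      case True
      show ?thesis using sep_pts_k[OF r1 r2 c x y t1 tb kM eq True] by linarith
    next
      case False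
      then have lt: "dg r2 y k < dg r1 x k" using kd by simp
      have eq': "\<forall>j<k. dg r2 y j = dg r1 x j" using eq by simp
      show ?thesis using sep_pts_k[OF r2 r1 c[symmetric] y x t2 tb kM eq' lt] by linarith
    qed
  qed
  then show ?thesis using kd eq ki i(1) by (intro exI[of _ k]) auto
qed

lemma sep_count:
  fixes A :: "real set"
  assumes fin: "finite A" and sub: "A \<subseteq> {0..L}" and d: "0 < \<delta>" and L0: "0 \<le> L"
    and sep: "\<forall>x\<in>A. \<forall>y\<in>A. x \<noteq> y \<longrightarrow> \<delta> \<le> \<bar>x - y\<bar>"
  shows "real (card A) \<le> L / \<delta> + 1"
proof (cases "A = {}")
  case True
  then show ?thesis using L0 d by simp
next
  case False
  define g where "g x = nat \<lfloor>x / \<delta>\<rfloor>" for x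
  have inj: "inj_on g A"
  proof (rule inj_onI)
    fix x y assume xy: "x \<in> A" "y \<in> A" "g x = g y"
    have "0 \<le> x / \<delta>" "0 \<le> y / \<delta>" using xy sub d by auto
    then have "\<lfloor>x / \<delta>\<rfloor> \<ge> 0" "\<lfloor>y / \<delta>\<rfloor> \<ge> 0" by simp_all
    then have "\<lfloor>x / \<delta>\<rfloor> = \<lfloor>y / \<delta>\<rfloor>" using xy(3) eq_nat_nat_iff unfolding g_def by blast
    then have "\<bar>x / \<delta> - y / \<delta>\<bar> < 1" by linarith
    then have "\<bar>x - y\<bar> < \<delta>" using d by (simp add: diff_divide_distrib[symmetric] abs_divide)
    then show "x = y" using sep xy by force
  qed
  have img: "g ` A \<subseteq> {0..nat \<lfloor>L / \<delta>\<rfloor>}"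
  proof
    fix z assume "z \<in> g ` A"
    then obtain x where x: "x \<in> A" "z = g x" by blast
    have "x \<le> L" using x sub by auto
    then have "x / \<delta> \<le> L / \<delta>" using d by (simp add: divide_right_mono)
    then have "\<lfloor>x / \<delta>\<rfloor> \<le> \<lfloor>L / \<delta>\<rfloor>" by (rule floor_mono)
    then show "z \<in> {0..nat \<lfloor>L / \<delta>\<rfloor>}" using x unfolding g_def by auto
  qed
  have "card A = card (g ` A)" using card_image[OF inj] by simp
  also have "\<dots> \<le> card {0..nat \<lfloor>L / \<delta>\<rfloor>}" by (rule card_mono[OF _ img]) simp
  also have "\<dots> = nat \<lfloor>L / \<delta>\<rfloor> + 1" by simp
  finally have "real (card A) \<le> real (nat \<lfloor>L / \<delta>\<rfloor>) + 1" by linarith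
  also have "real (nat \<lfloor>L / \<delta>\<rfloor>) \<le> L / \<delta>" using L0 d by simp
  finally show ?thesis by simp
qed

lemma geom_sum: "1 < (b::real) \<Longrightarrow> (\<Sum>i<m. 1 / b ^ Suc i) = (1 - 1 / b ^ m) / (b - 1)"
proof (induction m)
  case 0 then show ?case by (simp add: field_simps)
next
  case (Suc m)
  have "(\<Sum>i<Suc m. 1 / b ^ Suc i) = (1 - 1 / b ^ m) / (b - 1) + 1 / b ^ Suc m" using Suc by simp
  also have "\<dots> = (1 - 1 / b ^ Suc m) / (b - 1)" using Suc.prems by (simp add: field_simps)
  finally show ?case .
qed

lemma geom_le: fixes b c :: real assumes b: "1 < b" and that: "0 \<le> c" shows "(\<Sum>i<m. c / b ^ Suc i) \<le> c / (b - 1)"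
proof -
  have "(\<Sum>i<m. c / b ^ Suc i) = c * (\<Sum>i<m. 1 / b ^ Suc i)" unfolding sum_distrib_left by simp
  also have "\<dots> = c * ((1 - 1 / b ^ m) / (b - 1))" using geom_sum[OF b] by simp
  also have "\<dots> \<le> c * (1 / (b - 1))" using b that by (intro mult_left_mono divide_right_mono) auto
  finally show ?thesis by simp
qed

lemma V_bounds: "1 < b \<Longrightarrow> 0 \<le> x \<Longrightarrow> 0 \<le> V b r x m \<and> V b r x m \<le> real (cd r) / (b - 1)"
proof -
  assume b: "1 < b" and x: "0 \<le> x"
  have "V b r x m \<le> (\<Sum>i<m. real (cd r) / b ^ Suc i)" unfolding V_def
    using dg_le[OF x] b by (intro sum_mono divide_right_mono) auto
  also have "\<dots> \<le> real (cd r) / (b - 1)" by (rule geom_le[OF b]) simp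
  finally show ?thesis using b unfolding V_def by (auto intro: sum_nonneg)
qed

definition wd :: "real \<Rightarrow> real \<Rightarrow> nat \<Rightarrow> nat list" where "wd r x m = map (dg r x) [0..<m]"
definition valL :: "real \<Rightarrow> nat list \<Rightarrow> real" where "valL b w = (\<Sum>i<length w. real (w ! i) / b ^ Suc i)"

lemma valL_wd: "valL b (wd r x m) = V b r x m"
  unfolding valL_def wd_def V_def by (intro sum.cong) auto

lemma wd_neq: "wd r1 x m \<noteq> wd r2 y m \<Longrightarrow> \<exists>i<m. dg r1 x i \<noteq> dg r2 y i"
  unfolding wd_def by (auto intro!: nth_equalityI)

definition WS :: "real set \<Rightarrow> nat \<Rightarrow> nat list set" where
  "WS R m = {wd r x m | r x. r \<in> R \<and> x \<in> greedy_interval r}"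

lemma count_W:
  assumes b: "1 < b" and tb: "t < b" and t0: "0 \<le> t"
    and R: "\<And>r. r \<in> R \<Longrightarrow> 1 < r \<and> cd r = c \<and> r \<le> t"
  shows "finite (WS R m) \<and> real (card (WS R m)) \<le> (real c / ((b - 1) * (1 - t / b)) + 1) * b ^ m"
proof -
  have gi: "\<And>r x. x \<in> greedy_interval r \<Longrightarrow> 0 \<le> x" unfolding greedy_interval_def by auto
  have sub: "WS R m \<subseteq> {xs. set xs \<subseteq> {0..c} \<and> length xs = m}"
  proof
    fix w assume "w \<in> WS R m"
    then obtain r x where w: "w = wd r x m" "r \<in> R" "x \<in> greedy_interval r" unfolding WS_def by blast
    have "\<And>i. dg r x i \<le> c" using dg_le[OF gi[OF w(3)]] R[OF w(2)] by metis
    then show "w \<in> {xs. set xs \<subseteq> {0..c} \<and> length xs = m}" using w(1) unfolding wd_def by auto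
  qed
  have fin: "finite (WS R m)" by (rule finite_subset[OF sub finite_lists_length_eq]) simp
  define \<delta> where "\<delta> = (1 - t / b) / b ^ m"
  have tb1: "t / b < 1" using tb b by simp
  have d0: "0 < \<delta>" unfolding \<delta>_def using tb1 b by simp
  have sepw: "\<delta> \<le> \<bar>valL b w1 - valL b w2\<bar>" if w1: "w1 \<in> WS R m" and w2: "w2 \<in> WS R m" and ne: "w1 \<noteq> w2" for w1 w2
  proof -
    obtain r1 x where a: "w1 = wd r1 x m" "r1 \<in> R" "x \<in> greedy_interval r1" using w1 unfolding WS_def by blast
    obtain r2 y where bb: "w2 = wd r2 y m" "r2 \<in> R" "y \<in> greedy_interval r2" using w2 unfolding WS_def by blast
    have ex: "\<exists>i<m. dg r1 x i \<noteq> dg r2 y i" using wd_neq ne a(1) bb(1) by blast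
    have r1: "1 < r1" "cd r1 = c" "r1 \<le> t" using R[OF a(2)] by auto
    have r2: "1 < r2" "cd r2 = c" "r2 \<le> t" using R[OF bb(2)] by auto
    obtain k where k: "k < m" "(1 - t / b) / b ^ Suc k \<le> \<bar>V b r2 y m - V b r1 x m\<bar>"
      using sep_pts[OF r1(1) r2(1) _ gi[OF a(3)] gi[OF bb(3)] r1(3) r2(3) _ ex, of b] r1 r2 tb by auto
    have "b ^ Suc k \<le> b ^ m" using k(1) b by (intro power_increasing) auto
    then have "\<delta> \<le> (1 - t / b) / b ^ Suc k" unfolding \<delta>_def using tb1 b
      by (intro divide_left_mono) auto
    also have "\<dots> \<le> \<bar>valL b w1 - valL b w2\<bar>" using k(2) unfolding a(1) bb(1) valL_wd by linarith
    finally show ?thesis .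
  qed
  have inj: "inj_on (valL b) (WS R m)"
    by (rule inj_onI) (metis sepw d0 abs_zero diff_self not_le)
  have img: "valL b ` WS R m \<subseteq> {0..real c / (b - 1)}"
  proof
    fix z assume "z \<in> valL b ` WS R m"
    then obtain r x where w: "z = valL b (wd r x m)" "r \<in> R" "x \<in> greedy_interval r" unfolding WS_def by blast
    show "z \<in> {0..real c / (b - 1)}" using V_bounds[OF b gi[OF w(3)], of r m] R[OF w(2)] w(1) valL_wd by auto
  qed
  have "real (card (WS R m)) = real (card (valL b ` WS R m))" using card_image[OF inj] by simp
  also have "\<dots> \<le> (real c / (b - 1)) / \<delta> + 1"
    using sep_count[OF finite_imageI[OF fin] img d0] sepw b by fastforce
  also have "\<dots> = (real c / ((b - 1) * (1 - t / b))) * b ^ m + 1" unfolding \<delta>_def using b tb1 by (simp add: field_simps)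
  also have "\<dots> \<le> (real c / ((b - 1) * (1 - t / b)) + 1) * b ^ m"
  proof -
    have "1 \<le> b ^ m" using b by simp
    then show ?thesis by (simp add: distrib_right)
  qed
  finally show ?thesis using fin by simp
qed

definition FF :: "real \<Rightarrow> real \<Rightarrow> real \<Rightarrow> real" where
  "FF q r x = (\<Sum>i. real (dg r x i) / q ^ Suc i)"

lemma G_set_FF: "G_set r q = FF q r ` greedy_interval r"
  unfolding G_set_def FF_def dg_def ..

lemma FF_bounds:
  assumes q: "1 < q" and x: "0 \<le> x"
  shows "V q r x m \<le> FF q r x \<and> FF q r x \<le> V q r x m + real (cd r) / ((q - 1) * q ^ m)"
proof -
  define f where "f i = real (dg r x i) / q ^ Suc i" for i
  define g where "g i = (real (cd r) / q) * (1 / q) ^ i" for i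
  have q1: "norm (1 / q) < 1" using q by simp
  have sg: "summable g" unfolding g_def by (intro summable_mult summable_geometric q1)
  have fg: "0 \<le> f i \<and> f i \<le> g i" for i
    unfolding f_def g_def using dg_le[OF x, of r i] q by (auto simp: divide_right_mono power_divide field_simps)
  have sf: "summable f" by (rule summable_comparison_test'[OF sg, of 0]) (use fg in auto)
  have split: "FF q r x = (\<Sum>n. f (n + m)) + V q r x m"
    unfolding FF_def V_def f_def[symmetric] by (rule suminf_split_initial_segment[OF sf])
  have t0: "0 \<le> (\<Sum>n. f (n + m))" by (intro suminf_nonneg summable_ignore_initial_segment[OF sf]) (use fg in auto)
  have "(\<Sum>n. f (n + m)) \<le> (\<Sum>n. g (n + m))"
    by (intro suminf_le summable_ignore_initial_segment sf sg) (use fg in auto)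
  also have "(\<Sum>n. g (n + m)) = (\<Sum>n. (real (cd r) / q * (1 / q) ^ m) * (1 / q) ^ n)"
    unfolding g_def by (simp add: power_add mult_ac)
  also have "\<dots> = (real (cd r) / q * (1 / q) ^ m) * (1 / (1 - 1 / q))"
    unfolding suminf_mult[OF summable_geometric[OF q1]] suminf_geometric[OF q1] ..
  also have "\<dots> = real (cd r) / ((q - 1) * q ^ m)" using q by (simp add: field_simps power_divide)
  finally show ?thesis using split t0 by simp
qed

lemma content_finite_cover:
  fixes A :: "'a::metric_space set" and S :: "'b \<Rightarrow> 'a set"
  assumes F: "finite F" and cov: "A \<subseteq> (\<Union>j\<in>F. S j)"
    and bd: "\<And>j. j \<in> F \<Longrightarrow> bounded (S j) \<and> diameter (S j) \<le> \<delta>" and d: "0 \<le> \<delta>"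
  shows "hausdorff_content s \<delta> A \<le> (\<Sum>j\<in>F. ennreal (diameter (S j) powr s))"
proof -
  obtain n :: nat and g where ng: "F = g ` {i. i < n}" "inj_on g {i. i < n}"
    using finite_imp_nat_seg_image_inj_on[OF F] by blast
  define U where "U i = (if i < n then S (g i) else {})" for i
  have Ucov: "U \<in> {U :: nat \<Rightarrow> 'a set. A \<subseteq> (\<Union>i. U i) \<and> (\<forall>i. bounded (U i) \<and> diameter (U i) \<le> \<delta>)}"
  proof (safe)
    fix x assume "x \<in> A"
    then obtain j where j: "j \<in> F" "x \<in> S j" using cov by blast
    then obtain i where "i < n" "j = g i" using ng by blast
    then show "x \<in> (\<Union>i. U i)" using j unfolding U_def by (intro UN_I[of i]) auto
  next
    fix i show "bounded (U i)" using bd ng unfolding U_def by auto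
  next
    fix i show "diameter (U i) \<le> \<delta>" using bd ng d unfolding U_def by auto
  qed
  have "hausdorff_content s \<delta> A \<le> (\<Sum>i. ennreal (diameter (U i) powr s))"
    unfolding hausdorff_content_def by (rule INF_lower[OF Ucov])
  also have "(\<Sum>i. ennreal (diameter (U i) powr s)) = (\<Sum>i\<in>{..<n}. ennreal (diameter (U i) powr s))"
    by (rule suminf_finite) (auto simp: U_def)
  also have "\<dots> = (\<Sum>i\<in>{..<n}. ennreal (diameter (S (g i)) powr s))"
    by (intro sum.cong) (auto simp: U_def)
  also have "\<dots> = (\<Sum>j\<in>F. ennreal (diameter (S j) powr s))"
    using sum.reindex[OF ng(2), of "\<lambda>j. ennreal (diameter (S j) powr s)"] ng(1) by (simp add: lessThan_def)
  finally show ?thesis .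
qed

lemma cover_S:
  assumes q: "1 < q" and R: "\<And>r. r \<in> R \<Longrightarrow> 1 < r \<and> cd r = c"
  shows "(\<Union>r\<in>R. G_set r q) \<subseteq> (\<Union>w\<in>WS R m. {valL q w .. valL q w + real c / ((q - 1) * q ^ m)})"
proof
  fix z assume "z \<in> (\<Union>r\<in>R. G_set r q)"
  then obtain r x where rx: "r \<in> R" "x \<in> greedy_interval r" "z = FF q r x" unfolding G_set_FF by blast
  have x: "0 \<le> x" using rx(2) unfolding greedy_interval_def by auto
  have w: "wd r x m \<in> WS R m" unfolding WS_def using rx by blast
  show "z \<in> (\<Union>w\<in>WS R m. {valL q w .. valL q w + real c / ((q - 1) * q ^ m)})"
    using FF_bounds[OF q x, of r m] rx(3) R[OF rx(1)] valL_wd[of q r x m] w by force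
qed

lemma qpow_powr: "1 < (q::real) \<Longrightarrow> (q ^ m) powr s = (q powr s) ^ m"
proof -
  assume q: "1 < q"
  have "(q ^ m) powr s = (q powr real m) powr s" using q by (simp add: powr_realpow)
  also have "\<dots> = q powr (real m * s)" by (simp add: powr_powr)
  also have "\<dots> = (q powr s) ^ m" using q by (simp add: powr_power)
  finally show ?thesis .
qed

lemma hm_zero_upper:
  assumes q: "1 < q" and b: "1 < b" and tb: "t < b" and t0: "0 \<le> t"
    and R: "\<And>r. r \<in> R \<Longrightarrow> 1 < r \<and> cd r = c \<and> r \<le> t"
    and s: "0 < s" and bq: "b < q powr s"
  shows "hausdorff_measure s (\<Union>r\<in>R. G_set r q) = 0"
proof -
  define C where "C = real c / ((b - 1) * (1 - t / b)) + 1"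
  define h where "h = real c / (q - 1)"
  define \<theta> where "\<theta> = b / q powr s"
  have h0: "0 \<le> h" unfolding h_def using q by simp
  have tb1: "t / b < 1" using tb b by simp
  have "0 < (b - 1) * (1 - t / b)" using b tb1 by simp
  then have C0: "0 \<le> C" unfolding C_def by simp
  have qs: "0 < q powr s" using q by simp
  have th: "0 \<le> \<theta>" "\<theta> < 1" unfolding \<theta>_def using b bq qs by (auto simp: field_simps)
  have content0: "hausdorff_content s \<delta> (\<Union>r\<in>R. G_set r q) = 0" if d: "0 < \<delta>" for \<delta>
  proof -
    have lim1: "(\<lambda>m. C * h powr s * \<theta> ^ m) \<longlonglongrightarrow> 0"
      by (intro tendsto_mult_right_zero LIMSEQ_power_zero) (use th in auto)
    have lim2: "(\<lambda>m. h * (1 / q) ^ m) \<longlonglongrightarrow> 0"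
      by (intro tendsto_mult_right_zero LIMSEQ_power_zero) (use q in auto)
    show ?thesis
    proof (rule antisym[OF ennreal_le_epsilon zero_le])
      fix e :: real assume e: "0 < e"
      have "\<forall>\<^sub>F m in sequentially. C * h powr s * \<theta> ^ m < e \<and> h * (1 / q) ^ m < \<delta>"
        using order_tendstoD(2)[OF lim1 e] order_tendstoD(2)[OF lim2 d] by (rule eventually_conj)
      then obtain m where m: "C * h powr s * \<theta> ^ m < e" "h * (1 / q) ^ m < \<delta>"
        unfolding eventually_sequentially by blast
      define L where "L = h / q ^ m"
      have L: "L = real c / ((q - 1) * q ^ m)" unfolding L_def h_def by simp
      have L0: "0 \<le> L" "L \<le> \<delta>" using m(2) h0 q unfolding L_def by (auto simp: power_divide)
      have cnt: "finite (WS R m)" "real (card (WS R m)) \<le> C * b ^ m"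
        using count_W[OF b tb t0 R, where m=m] unfolding C_def by auto
      have "hausdorff_content s \<delta> (\<Union>r\<in>R. G_set r q)
          \<le> (\<Sum>w\<in>WS R m. ennreal (diameter {valL q w .. valL q w + L} powr s))"
        apply (rule content_finite_cover[OF cnt(1) _ _])
        using cover_S[where q=q and R=R and c=c and m=m] q R L L0 d by (auto simp: bounded_closed_interval)
      also have "\<dots> = (\<Sum>w\<in>WS R m. ennreal (L powr s))" using L0 by simp
      also have "\<dots> = ennreal (real (card (WS R m)) * L powr s)"
        by (simp add: ennreal_mult ennreal_of_nat_eq_real_of_nat)
      also have "\<dots> \<le> ennreal (C * b ^ m * L powr s)"
        by (intro ennreal_leI mult_right_mono cnt(2)) simp
      also have "C * b ^ m * L powr s = C * h powr s * \<theta> ^ m"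
        unfolding L_def \<theta>_def using q qpow_powr[OF q, of m s] by (simp add: powr_divide power_divide)
      also have "ennreal (C * h powr s * \<theta> ^ m) \<le> 0 + ennreal e" using m(1) by (simp add: ennreal_leI)
      finally show "hausdorff_content s \<delta> (\<Union>r\<in>R. G_set r q) \<le> 0 + ennreal e" .
    qed
  qed
  show ?thesis unfolding hausdorff_measure_def using content0 by simp
qed

lemma vanish_lemma:
  fixes a g :: real
  assumes q: "1 < q" and ineq: "\<And>M. k < M \<Longrightarrow> g - C / q ^ M \<le> a"
  shows "g \<le> a"
proof (rule ccontr)
  assume "\<not> g \<le> a"
  then have gp: "0 < g - a" by simp
  have lim: "(\<lambda>M. C * (1 / q) ^ M) \<longlonglongrightarrow> 0"
    by (intro tendsto_mult_right_zero LIMSEQ_power_zero) (use q in auto)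
  have "\<forall>\<^sub>F M in sequentially. C * (1 / q) ^ M < g - a \<and> k < M"
    using order_tendstoD(2)[OF lim gp] eventually_gt_at_top by (rule eventually_conj)
  then obtain M where M: "C * (1 / q) ^ M < g - a" "k < M" unfolding eventually_sequentially by blast
  have "g - C / q ^ M \<le> a" using ineq[OF M(2)] .
  then show False using M(1) by (simp add: power_divide)
qed

lemma FF_sep:
  assumes r: "1 < r" and rq: "r < q" and x: "x \<in> greedy_interval r" and y: "y \<in> greedy_interval r"
    and ex: "\<exists>i<m. dg r x i \<noteq> dg r y i"
  shows "(1 - r / q) / q ^ m \<le> \<bar>FF q r y - FF q r x\<bar>"
proof -
  have q: "1 < q" using r rq by simp
  have x0: "0 \<le> x" and y0: "0 \<le> y" using x y unfolding greedy_interval_def by auto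
  obtain k where k: "k < m" "\<forall>M. k < M \<longrightarrow> (1 - r / q) / q ^ Suc k \<le> \<bar>V q r y M - V q r x M\<bar>"
    using sep_pts[OF r r refl x0 y0 order_refl order_refl _ ex, of q] rq by auto
  define E where "E = real (cd r) / (q - 1)"
  have step: "(1 - r / q) / q ^ Suc k - (2 * E) / q ^ M \<le> \<bar>FF q r y - FF q r x\<bar>" if kM: "k < M" for M
  proof -
    have bx: "V q r x M \<le> FF q r x" "FF q r x \<le> V q r x M + E / q ^ M"
      using FF_bounds[OF q x0, of r M] unfolding E_def by (auto simp: field_simps)
    have by': "V q r y M \<le> FF q r y" "FF q r y \<le> V q r y M + E / q ^ M"
      using FF_bounds[OF q y0, of r M] unfolding E_def by (auto simp: field_simps)
    have "(1 - r / q) / q ^ Suc k \<le> \<bar>V q r y M - V q r x M\<bar>" using k(2) kM by blast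
    moreover have e2: "(2 * E) / q ^ M = 2 * (E / q ^ M)" by simp
    ultimately show ?thesis using bx by' by (smt (verit))
  qed
  have "(1 - r / q) / q ^ Suc k \<le> \<bar>FF q r y - FF q r x\<bar>" by (rule vanish_lemma[OF q step])
  moreover have "(1 - r / q) / q ^ m \<le> (1 - r / q) / q ^ Suc k"
  proof -
    have "q ^ Suc k \<le> q ^ m" using k(1) q by (intro power_increasing) auto
    moreover have "0 \<le> 1 - r / q" using rq q by simp
    ultimately show ?thesis using q by (intro divide_left_mono) auto
  qed
  ultimately show ?thesis by linarith
qed

lemma FF_inj:
  assumes r: "1 < r" and rq: "r < q" and x: "x \<in> greedy_interval r" and y: "y \<in> greedy_interval r"
    and eq: "FF q r x = FF q r y"
  shows "x = y"
proof -
  have q: "1 < q" using r rq by simp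
  have rq1: "0 < 1 - r / q" using rq q by simp
  have dig: "dg r x i = dg r y i" for i
  proof (rule ccontr)
    assume "dg r x i \<noteq> dg r y i"
    then have "(1 - r / q) / q ^ Suc i \<le> \<bar>FF q r y - FF q r x\<bar>" by (intro FF_sep[OF r rq x y]) auto
    moreover have "0 < (1 - r / q) / q ^ Suc i" using rq1 q by simp
    ultimately show False using eq by simp
  qed
  have x0: "0 \<le> x" "x \<le> real (cd r) / (r - 1)" and y0: "0 \<le> y" "y \<le> real (cd r) / (r - 1)"
    using x y r unfolding greedy_interval_def by (auto simp: cd_real)
  define M where "M = real (cd r) / (r - 1)"
  have "\<bar>x - y\<bar> \<le> 0"
  proof (rule vanish_lemma[OF r, where g="\<bar>x - y\<bar>" and a=0 and C="2 * M" and k=0])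
    fix n :: nat
    have P: "greedy_psum r x n = greedy_psum r y n" unfolding psum_eq dig ..
    have "x - greedy_psum r x n \<le> M / r ^ n" "y - greedy_psum r y n \<le> M / r ^ n"
      using tail_bound[OF r x0] tail_bound[OF r y0] unfolding M_def by auto
    moreover have "greedy_psum r x n \<le> x" "greedy_psum r y n \<le> y" using psum_le x0 y0 by auto
    moreover have "2 * M / r ^ n = 2 * (M / r ^ n)" by simp
    ultimately show "\<bar>x - y\<bar> - 2 * M / r ^ n \<le> 0" using P by (smt (verit))
  qed
  then show ?thesis by simp
qed

lemma cyl_zero:
  assumes r: "1 < r" and rq: "r < q" and U: "bounded U" "diameter U \<le> 0"
  shows "\<exists>a. {x \<in> greedy_interval r. FF q r x \<in> U} \<subseteq> {a..a}"
proof (cases "{x \<in> greedy_interval r. FF q r x \<in> U} = {}")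
  case True then show ?thesis by blast
next
  case False
  then obtain x0 where x0: "x0 \<in> greedy_interval r" "FF q r x0 \<in> U" by blast
  have "{x \<in> greedy_interval r. FF q r x \<in> U} \<subseteq> {x0..x0}"
  proof
    fix x assume x: "x \<in> {x \<in> greedy_interval r. FF q r x \<in> U}"
    have "dist (FF q r x) (FF q r x0) \<le> diameter U" using diameter_bounded_bound[OF U(1)] x x0 by auto
    then have "dist (FF q r x) (FF q r x0) \<le> 0" using U(2) by linarith
    then have "FF q r x = FF q r x0" by simp
    then have "x = x0" using FF_inj[OF r rq] x x0 by blast
    then show "x \<in> {x0..x0}" by simp
  qed
  then show ?thesis by blast
qed

lemma cyl_small:
  assumes r: "1 < r" and rq: "r < q" and U: "bounded U" and d0: "0 < diameter U"
    and d1: "diameter U \<le> (1 - r / q) / q"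
  shows "\<exists>a l. {x \<in> greedy_interval r. FF q r x \<in> U} \<subseteq> {a..a+l} \<and> 0 \<le> l \<and>
     l \<le> (real (cd r) / (r - 1)) * (q / (1 - r / q)) powr (ln r / ln q) * diameter U powr (ln r / ln q)"
proof -
  define d where "d = diameter U"
  define \<rho> where "\<rho> = 1 - r / q"
  define s0 where "s0 = ln r / ln q"
  define M where "M = real (cd r) / (r - 1)"
  have q: "1 < q" using r rq by simp
  have \<rho>0: "0 < \<rho>" unfolding \<rho>_def using rq q by simp
  have s00: "0 \<le> s0" unfolding s0_def using r q by simp
  have M0: "0 \<le> M" unfolding M_def using r by simp
  have rs0: "q powr s0 = r" unfolding s0_def using r q by (simp add: powr_def)
  have lim: "(\<lambda>n. \<rho> / q * (1 / q) ^ n) \<longlonglongrightarrow> 0"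
    by (intro tendsto_mult_right_zero LIMSEQ_power_zero) (use q in auto)
  have "\<forall>\<^sub>F n in sequentially. \<rho> / q * (1 / q) ^ n < d" using order_tendstoD(2)[OF lim] d0 unfolding d_def by blast
  then obtain n0 where "\<rho> / q * (1 / q) ^ n0 < d" unfolding eventually_sequentially by blast
  then have ex: "\<rho> / q ^ Suc n0 \<le> d" by (simp add: power_divide)
  define m where "m = (LEAST n. \<rho> / q ^ Suc n \<le> d)"
  have m1: "\<rho> / q ^ Suc m \<le> d" unfolding m_def by (rule LeastI[of _ n0]) (rule ex)
  have m2: "d < \<rho> / q ^ m"
  proof (cases m)
    case 0
    have "d \<le> \<rho> / q" using d1 unfolding d_def \<rho>_def .
    also have "\<dots> < \<rho>" using \<rho>0 q by (simp add: divide_less_eq)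
    finally show ?thesis using 0 by simp
  next
    case (Suc m')
    have "m' < m" using Suc by simp
    then have "\<not> \<rho> / q ^ Suc m' \<le> d" unfolding m_def by (rule not_less_Least)
    then show ?thesis using Suc by simp
  qed
  define X where "X = {x \<in> greedy_interval r. FF q r x \<in> U}"
  have same: "dg r x i = dg r y i" if x: "x \<in> X" and y: "y \<in> X" and i: "i < m" for x y i
  proof (rule ccontr)
    assume "dg r x i \<noteq> dg r y i"
    then have "\<rho> / q ^ m \<le> \<bar>FF q r y - FF q r x\<bar>" unfolding \<rho>_def
      using FF_sep[OF r rq, of x y m] x y i unfolding X_def by blast
    moreover have "dist (FF q r y) (FF q r x) \<le> d" unfolding d_def
      using diameter_bounded_bound[OF U] x y unfolding X_def by auto
    ultimately show False using m2 by (simp add: dist_real_def)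
  qed
  define l where "l = M / r ^ m"
  have l0: "0 \<le> l" unfolding l_def using M0 r by simp
  have lb: "l \<le> M * (q / \<rho>) powr s0 * d powr s0"
  proof -
    have "1 / q ^ m \<le> q * d / \<rho>" using m1 \<rho>0 q by (simp add: field_simps)
    then have "(1 / q ^ m) powr s0 \<le> (q * d / \<rho>) powr s0" using s00 q by (intro powr_mono2) auto
    also have "(q * d / \<rho>) powr s0 = (q / \<rho>) powr s0 * d powr s0" by (simp add: powr_divide powr_mult)
    also have "(1 / q ^ m) powr s0 = 1 / r ^ m" using qpow_powr[OF q, of m s0] rs0 by (simp add: powr_divide)
    finally have "1 / r ^ m \<le> (q / \<rho>) powr s0 * d powr s0" .
    then have "M * (1 / r ^ m) \<le> M * ((q / \<rho>) powr s0 * d powr s0)" using M0 by (rule mult_left_mono)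
    then show ?thesis unfolding l_def by (simp add: mult_ac)
  qed
  show ?thesis
  proof (cases "X = {}")
    case True
    then show ?thesis using l0 lb unfolding X_def M_def \<rho>_def s0_def d_def by (intro exI[of _ 0] exI[of _ l]) auto
  next
    case False
    then obtain x0 where x0: "x0 \<in> X" by blast
    have "X \<subseteq> {greedy_psum r x0 m .. greedy_psum r x0 m + l}"
    proof
      fix x assume x: "x \<in> X"
      have P: "greedy_psum r x m = greedy_psum r x0 m" unfolding psum_eq using same[OF x x0] by (intro sum.cong) auto
      have xJ: "0 \<le> x" "x \<le> real (cd r) / (r - 1)" using x r unfolding X_def greedy_interval_def by (auto simp: cd_real)
      have "x - greedy_psum r x m \<le> l" using tail_bound[OF r xJ, of m] unfolding l_def M_def .
      moreover have "greedy_psum r x m \<le> x" using psum_le[OF xJ(1)] .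
      ultimately show "x \<in> {greedy_psum r x0 m .. greedy_psum r x0 m + l}" using P by simp
    qed
    then show ?thesis using l0 lb unfolding X_def M_def \<rho>_def s0_def d_def by blast
  qed
qed

lemma hm_pos_lower:
  assumes r: "1 < r" and rq: "r < q" and sub: "G_set r q \<subseteq> A" and s: "0 \<le> s"
    and ss0: "s \<le> ln r / ln q"
  shows "hausdorff_measure s A \<noteq> 0"
proof -
  define \<rho> where "\<rho> = 1 - r / q"
  define s0 where "s0 = ln r / ln q"
  define M where "M = real (cd r) / (r - 1)"
  define K where "K = M * (q / \<rho>) powr s0"
  define \<delta>0 where "\<delta>0 = \<rho> / q"
  have q: "1 < q" using r rq by simp
  have \<rho>0: "0 < \<rho>" "\<rho> < 1" unfolding \<rho>_def using rq q r by auto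
  have M0: "0 < M" unfolding M_def using r cd_ge1[OF r] by simp
  have K0: "0 < K" unfolding K_def using M0 \<rho>0 q by simp
  have d0: "0 < \<delta>0" "\<delta>0 \<le> 1" unfolding \<delta>0_def using \<rho>0 q by auto
  have J: "greedy_interval r = {0..M}" unfolding greedy_interval_def M_def using cd_real[OF r] by simp
  have main: "ennreal (M / K) \<le> hausdorff_content s \<delta>0 A"
    unfolding hausdorff_content_def
  proof (rule INF_greatest)
    fix U :: "nat \<Rightarrow> real set"
    assume "U \<in> {U. A \<subseteq> (\<Union>i. U i) \<and> (\<forall>i. bounded (U i) \<and> diameter (U i) \<le> \<delta>0)}"
    then have cov: "A \<subseteq> (\<Union>i. U i)" and bU: "\<And>i. bounded (U i)" and dU: "\<And>i. diameter (U i) \<le> \<delta>0" by auto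
    have "\<forall>i. \<exists>a l. {x \<in> greedy_interval r. FF q r x \<in> U i} \<subseteq> {a..a+l} \<and> 0 \<le> l \<and> l \<le> K * diameter (U i) powr s"
    proof
      fix i
      have dg0: "0 \<le> diameter (U i)" by (rule diameter_ge_0[OF bU])
      show "\<exists>a l. {x \<in> greedy_interval r. FF q r x \<in> U i} \<subseteq> {a..a+l} \<and> 0 \<le> l \<and> l \<le> K * diameter (U i) powr s"
      proof (cases "diameter (U i) \<le> 0")
        case True
        obtain a where "{x \<in> greedy_interval r. FF q r x \<in> U i} \<subseteq> {a..a}" using cyl_zero[OF r rq bU True] by blast
        then show ?thesis using K0 by (intro exI[of _ a] exI[of _ 0]) auto
      next
        case False
        then have dp: "0 < diameter (U i)" by simp
        obtain a l where al: "{x \<in> greedy_interval r. FF q r x \<in> U i} \<subseteq> {a..a+l}" "0 \<le> l"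
            "l \<le> M * (q / \<rho>) powr s0 * diameter (U i) powr s0"
          using cyl_small[OF r rq bU dp] dU unfolding \<delta>0_def \<rho>_def M_def s0_def by blast
        have "diameter (U i) powr s0 \<le> diameter (U i) powr s"
          using ss0 dg0 dU[of i] d0 unfolding s0_def by (intro powr_mono') auto
        then have "l \<le> K * diameter (U i) powr s" using al(3) K0 unfolding K_def
          by (meson less_le mult_left_mono order_trans)
        then show ?thesis using al by blast
      qed
    qed
    then obtain a l where al: "\<And>i. {x \<in> greedy_interval r. FF q r x \<in> U i} \<subseteq> {a i..a i + l i}"
        "\<And>i. 0 \<le> l i" "\<And>i. l i \<le> K * diameter (U i) powr s" by metis
    have Jsub: "{0..M} \<subseteq> (\<Union>i. {a i..a i + l i})"
    proof
      fix x assume x: "x \<in> {0..M}"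
      then have "FF q r x \<in> G_set r q" unfolding G_set_FF J by blast
      then obtain i where "FF q r x \<in> U i" using sub cov by blast
      then show "x \<in> (\<Union>i. {a i..a i + l i})" using al(1)[of i] x J by blast
    qed
    have "ennreal M = emeasure lborel {0..M}" using M0 by simp
    also have "\<dots> \<le> emeasure lborel (\<Union>i. {a i..a i + l i})" by (rule emeasure_mono[OF Jsub]) auto
    also have "\<dots> \<le> (\<Sum>i. emeasure lborel {a i..a i + l i})" by (rule emeasure_subadditive_countably) auto
    also have "\<dots> = (\<Sum>i. ennreal (l i))" using al(2) by simp
    also have "\<dots> \<le> (\<Sum>i. ennreal K * ennreal (diameter (U i) powr s))"
      using al(3) K0 by (intro suminf_le summableI) (auto simp: ennreal_mult[symmetric] ennreal_leI)
    also have "\<dots> = ennreal K * (\<Sum>i. ennreal (diameter (U i) powr s))" by simp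
    finally have *: "ennreal M \<le> ennreal K * (\<Sum>i. ennreal (diameter (U i) powr s))" .
    have "ennreal (M / K) = ennreal (1 / K * M)" by simp
    also have "\<dots> = ennreal (1 / K) * ennreal M" using K0 M0 by (intro ennreal_mult) auto
    also have "\<dots> \<le> ennreal (1 / K) * (ennreal K * (\<Sum>i. ennreal (diameter (U i) powr s)))"
      by (rule mult_left_mono[OF *]) simp
    also have "\<dots> = (\<Sum>i. ennreal (diameter (U i) powr s))"
      using K0 by (simp add: mult.assoc[symmetric] ennreal_mult[symmetric])
    finally show "ennreal (M / K) \<le> (\<Sum>i. ennreal (diameter (U i) powr s))" .
  qed
  have "hausdorff_content s \<delta>0 A \<le> hausdorff_measure s A"
    unfolding hausdorff_measure_def using d0 by (intro SUP_upper) auto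
  moreover have "0 < ennreal (M / K)" using M0 K0 by simp
  ultimately show ?thesis using main by (metis not_less order_trans zero_le)
qed

lemma dim_eq:
  fixes A :: "'a::metric_space set"
  assumes s0: "0 \<le> s0" and low: "\<And>s. 0 \<le> s \<Longrightarrow> s < s0 \<Longrightarrow> hausdorff_measure s A \<noteq> 0"
    and up: "\<And>s. s0 < s \<Longrightarrow> hausdorff_measure s A = 0"
  shows "hausdorff_dim A = ereal s0"
proof (rule antisym)
  show "hausdorff_dim A \<le> ereal s0"
    unfolding hausdorff_dim_def
  proof (rule ereal_le_epsilon2)
    fix e :: real assume e: "0 < e"
    have "ereal (s0 + e) \<in> {ereal s | s. 0 \<le> s \<and> hausdorff_measure s A = 0}"
      using up[of "s0 + e"] e s0 by auto
    then have "Inf {ereal s | s. 0 \<le> s \<and> hausdorff_measure s A = 0} \<le> ereal (s0 + e)" by (rule Inf_lower)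
    then show "Inf {ereal s | s. 0 \<le> s \<and> hausdorff_measure s A = 0} \<le> ereal s0 + ereal e" by simp
  qed
  show "ereal s0 \<le> hausdorff_dim A"
    unfolding hausdorff_dim_def
  proof (rule Inf_greatest)
    fix z assume "z \<in> {ereal s | s. 0 \<le> s \<and> hausdorff_measure s A = 0}"
    then obtain s where "z = ereal s" "0 \<le> s" "hausdorff_measure s A = 0" by blast
    then show "ereal s0 \<le> z" using low[of s] by force
  qed
qed

lemma part1:
  assumes r: "1 < r" and rq: "r < q"
  shows "hausdorff_dim (G_set r q) = ereal (ln r / ln q)"
proof (rule dim_eq)
  have q: "1 < q" using r rq by simp
  show "0 \<le> ln r / ln q" using r q by simp
  show "hausdorff_measure s (G_set r q) \<noteq> 0" if "0 \<le> s" "s < ln r / ln q" for s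
    using hm_pos_lower[OF r rq order_refl] that by simp
  show "hausdorff_measure s (G_set r q) = 0" if s: "ln r / ln q < s" for s
  proof -
    have rs0: "q powr (ln r / ln q) = r" using r q by (simp add: powr_def)
    have "r < q powr s" using powr_less_mono[OF s q] rs0 by simp
    define b where "b = (r + q powr s) / 2"
    have b: "1 < b" "r < b" "b < q powr s" unfolding b_def using \<open>r < q powr s\<close> r by auto
    have s0: "0 < s" using s r q by (smt (verit) divide_pos_pos ln_gt_zero)
    have "hausdorff_measure s (\<Union>r'\<in>{r}. G_set r' q) = 0"
      by (rule hm_zero_upper[OF q b(1) b(2) _ _ s0 b(3), where c="cd r"]) (use r in auto)
    then show ?thesis by simp
  qed
qed

lemma null_closure:
  assumes q: "1 < q" and b: "1 < b" and tb: "t < b" and t0: "0 \<le> t" and bq: "b < q"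
    and R: "\<And>r. r \<in> R \<Longrightarrow> 1 < r \<and> cd r = c \<and> r \<le> t"
  shows "closure (\<Union>r\<in>R. G_set r q) \<in> null_sets lborel"
proof -
  define C where "C = real c / ((b - 1) * (1 - t / b)) + 1"
  define h where "h = real c / (q - 1)"
  define Sg where "Sg = closure (\<Union>r\<in>R. G_set r q)"
  have h0: "0 \<le> h" unfolding h_def using q by simp
  have tb1: "t / b < 1" using tb b by simp
  have "0 < (b - 1) * (1 - t / b)" using b tb1 by simp
  then have C0: "0 \<le> C" unfolding C_def by simp
  have th: "0 \<le> b / q" "b / q < 1" using b bq q by auto
  have meas: "emeasure lborel Sg \<le> ennreal (C * h * (b / q) ^ m)" for m
  proof -
    define L where "L = h / q ^ m"
    have L0: "0 \<le> L" unfolding L_def using h0 q by simp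
    have cnt: "finite (WS R m)" "real (card (WS R m)) \<le> C * b ^ m"
      using count_W[OF b tb t0 R, where m=m] unfolding C_def by auto
    have cov: "(\<Union>r\<in>R. G_set r q) \<subseteq> (\<Union>w\<in>WS R m. {valL q w .. valL q w + L})"
      using cover_S[where q=q and R=R and c=c and m=m] q R unfolding L_def h_def by (auto simp: field_simps)
    have "Sg \<subseteq> (\<Union>w\<in>WS R m. {valL q w .. valL q w + L})"
      unfolding Sg_def by (rule closure_minimal[OF cov]) (use cnt(1) in auto)
    then have "emeasure lborel Sg \<le> emeasure lborel (\<Union>w\<in>WS R m. {valL q w .. valL q w + L})"
      by (rule emeasure_mono) auto
    also have "\<dots> \<le> (\<Sum>w\<in>WS R m. emeasure lborel {valL q w .. valL q w + L})"
      by (rule emeasure_subadditive_finite[OF cnt(1)]) auto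
    also have "\<dots> = (\<Sum>w\<in>WS R m. ennreal L)" using L0 by simp
    also have "\<dots> = ennreal (real (card (WS R m)) * L)"
      by (simp add: ennreal_mult ennreal_of_nat_eq_real_of_nat L0)
    also have "\<dots> \<le> ennreal (C * b ^ m * L)" by (intro ennreal_leI mult_right_mono cnt(2) L0)
    also have "C * b ^ m * L = C * h * (b / q) ^ m" unfolding L_def by (simp add: power_divide)
    finally show ?thesis .
  qed
  have lim: "(\<lambda>m. C * h * (b / q) ^ m) \<longlonglongrightarrow> 0"
    by (intro tendsto_mult_right_zero LIMSEQ_power_zero) (use th in auto)
  have "emeasure lborel Sg = 0"
  proof (rule antisym[OF ennreal_le_epsilon zero_le])
    fix e :: real assume e: "0 < e"
    obtain m where "C * h * (b / q) ^ m < e"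
      using order_tendstoD(2)[OF lim e] unfolding eventually_sequentially by blast
    then have "ennreal (C * h * (b / q) ^ m) \<le> 0 + ennreal e" by (simp add: ennreal_leI)
    then show "emeasure lborel Sg \<le> 0 + ennreal e" using meas[of m] by (rule order_trans[rotated])
  qed
  moreover have "Sg \<in> sets lborel" unfolding Sg_def by simp
  ultimately show ?thesis unfolding Sg_def by auto
qed

lemma null_nowhere:
  assumes N: "closure S \<in> null_sets lborel"
  shows "nowhere_dense (S :: real set)"
  unfolding nowhere_dense_def
proof (rule ccontr)
  assume "interior (closure S) \<noteq> {}"
  then obtain x where "x \<in> interior (closure S)" by blast
  then obtain e where e: "0 < e" "ball x e \<subseteq> closure S" by (meson mem_interior)
  have "{x - e/2 .. x + e/2} \<subseteq> ball x e" using e(1) by (auto simp: dist_real_def)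
  then have sub: "{x - e/2 .. x + e/2} \<subseteq> closure S" using e(2) by blast
  have "emeasure lborel {x - e/2 .. x + e/2} \<le> emeasure lborel (closure S)"
    by (rule emeasure_mono[OF sub]) simp
  also have "\<dots> = 0" using N by auto
  finally show False using e(1) by simp
qed

lemma hm_interval_zero:
  fixes A :: "real set"
  assumes s: "1 < s" and A: "A \<subseteq> {0..L0}"
  shows "hausdorff_measure s A = 0"
proof -
  define L where "L = max L0 1"
  have L: "0 < L" unfolding L_def by simp
  have AL: "A \<subseteq> {0..L}"
  proof
    fix x assume "x \<in> A" then have "x \<in> {0..L0}" using A by blast
    then show "x \<in> {0..L}" unfolding L_def by auto
  qed
  have content0: "hausdorff_content s \<delta> A = 0" if d: "0 < \<delta>" for \<delta>
  proof (rule antisym[OF ennreal_le_epsilon zero_le])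
    fix e :: real assume e: "0 < e"
    have lim1: "(\<lambda>N. 2 * L powr s * real N powr (1 - s)) \<longlonglongrightarrow> 0"
      by (intro tendsto_mult_right_zero tendsto_neg_powr filterlim_real_sequentially) (use s in auto)
    have lim2: "(\<lambda>N. L / real N) \<longlonglongrightarrow> 0"
      by (intro tendsto_divide_0[OF tendsto_const] filterlim_at_top_imp_at_infinity filterlim_real_sequentially)
    have "\<forall>\<^sub>F N in sequentially. (2 * L powr s * real N powr (1 - s) < e \<and> L / real N < \<delta>) \<and> 1 \<le> N"
      by (intro eventually_conj order_tendstoD(2)[OF lim1 e] order_tendstoD(2)[OF lim2 d] eventually_ge_at_top)
    then obtain N :: nat where N: "2 * L powr s * real N powr (1 - s) < e" "L / real N < \<delta>" "1 \<le> N"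
      unfolding eventually_sequentially by blast
    define I where "I k = {real k * L / real N .. real (Suc k) * L / real N}" for k
    have N0: "0 < real N" using N(3) by simp
    have dI: "diameter (I k) = L / real N" for k
    proof -
      have le: "\<not> real (Suc k) * L / real N < real k * L / real N" using L N0
        by (simp add: divide_right_mono mult_right_mono not_less)
      have "real (Suc k) * L / real N - real k * L / real N = L / real N"
        by (simp add: diff_divide_distrib[symmetric] algebra_simps)
      then show ?thesis unfolding I_def diameter_closed_interval using le by simp
    qed
    have cov: "A \<subseteq> (\<Union>k\<in>{..N}. I k)"
    proof
      fix x assume "x \<in> A"
      then have x: "0 \<le> x" "x \<le> L" using AL by auto
      define k where "k = nat \<lfloor>x * real N / L\<rfloor>"
      have f0: "0 \<le> x * real N / L" using x L N0 by simp
      have fl: "x * real N / L \<le> real N" using x L N0 by (simp add: field_simps)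
      have k1: "real k \<le> x * real N / L" "x * real N / L < real k + 1" unfolding k_def using f0 by linarith+
      have kN: "k \<le> N" unfolding k_def using fl by (simp add: nat_le_iff floor_le_iff)
      have "real k * L / real N \<le> x" using k1(1) L N0 by (simp add: field_simps)
      moreover have "x \<le> real (Suc k) * L / real N" using k1(2) L N0 by (simp add: field_simps)
      ultimately show "x \<in> (\<Union>k\<in>{..N}. I k)" using kN unfolding I_def by auto
    qed
    have "hausdorff_content s \<delta> A \<le> (\<Sum>k\<in>{..N}. ennreal (diameter (I k) powr s))"
      by (rule content_finite_cover[OF _ cov]) (use dI N(2) d in \<open>auto simp: I_def\<close>)
    also have "\<dots> = ennreal (real (Suc N) * (L / real N) powr s)"
      unfolding dI by (simp add: ennreal_mult ennreal_of_nat_eq_real_of_nat)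
    also have "real (Suc N) * (L / real N) powr s \<le> 2 * L powr s * real N powr (1 - s)"
    proof -
      have "real N powr (1 - s) = real N / real N powr s" using N0 by (simp add: powr_diff)
      then have eq: "2 * L powr s * real N powr (1 - s) = (2 * real N) * (L / real N) powr s"
        using N0 by (simp add: powr_divide field_simps)
      have "real (Suc N) \<le> 2 * real N" using N(3) by simp
      then show ?thesis unfolding eq by (intro mult_right_mono) auto
    qed
    then have "ennreal (real (Suc N) * (L / real N) powr s) \<le> 0 + ennreal e"
      using N(1) by (simp add: ennreal_leI)
    finally show "hausdorff_content s \<delta> A \<le> 0 + ennreal e" .
  qed
  show ?thesis unfolding hausdorff_measure_def using content0 by simp
qed



theorem theorem2p7:
  fixes q :: real
  assumes "q > 1"
  shows "(\<forall>r \<in> {1<..<q}. hausdorff_dim (G_set r q) = ereal (ln r / ln q))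
       \<and> first_category (\<Union>r \<in> {1<..<q}. G_set r q)
       \<and> (\<Union>r \<in> {1<..<q}. G_set r q) \<in> null_sets lebesgue
       \<and> hausdorff_dim (\<Union>r \<in> {1<..<q}. G_set r q) = 1"
proof -
  have q: "1 < q" using assms .
  define U where "U = (\<Union>r \<in> {1<..<q}. G_set r q)"
  define t where "t j = q - (q - 1) / (real j + 2)" for j :: nat
  define R where "R c j = {r. 1 < r \<and> cd r = c \<and> r \<le> t j}" for c :: nat and j :: nat
  define S where "S p = (\<Union>r\<in>R (fst p) (snd p). G_set r q)" for p :: "nat \<times> nat"
  have tj: "1 < t j \<and> t j < q" for j
  proof -
    have "(q - 1) / (real j + 2) < q - 1" using q by (simp add: divide_less_eq)
    moreover have "0 < (q - 1) / (real j + 2)" using q by simp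
    ultimately show ?thesis unfolding t_def by simp
  qed
  have NS: "closure (S p) \<in> null_sets lborel" for p
  proof -
    obtain c j where p: "p = (c, j)" by fastforce
    define b where "b = (t j + q) / 2"
    have b: "1 < b" "t j < b" "b < q" unfolding b_def using tj[of j] by auto
    show ?thesis unfolding p S_def fst_conv snd_conv
      by (rule null_closure[OF q b(1) b(2) _ b(3), where c=c]) (use tj[of j] in \<open>auto simp: R_def\<close>)
  qed
  have US: "U = (\<Union>p. S p)"
  proof
    show "U \<subseteq> (\<Union>p. S p)"
    proof
      fix z assume "z \<in> U"
      then obtain r where r: "1 < r" "r < q" "z \<in> G_set r q" unfolding U_def by auto
      define j where "j = nat \<lceil>(q - 1) / (q - r)\<rceil>"
      have qr: "0 < q - r" "0 < q - 1" using r q by auto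
      have j1: "(q - 1) / (q - r) \<le> real j + 2"
      proof -
        have "(q - 1) / (q - r) \<le> real_of_int \<lceil>(q - 1) / (q - r)\<rceil>" by (rule le_of_int_ceiling)
        also have "\<dots> \<le> real j" unfolding j_def by simp
        finally show ?thesis by simp
      qed
      have pos: "0 < (q - 1) / (q - r)" using qr by simp
      have pos2: "0 < (real j + 2) * ((q - 1) / (q - r))" using pos by (intro mult_pos_pos) auto
      have "(q - 1) / (real j + 2) \<le> (q - 1) / ((q - 1) / (q - r))"
        by (rule divide_left_mono[OF j1 _ pos2]) (use qr in simp)
      also have "\<dots> = q - r" using qr by (simp add: field_simps)
      finally have "(q - 1) / (real j + 2) \<le> q - r" .
      then have "r \<le> t j" unfolding t_def by linarith
      then have "r \<in> R (cd r) j" unfolding R_def using r by simp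
      then have "z \<in> S (cd r, j)" unfolding S_def using r(3) by auto
      then show "z \<in> (\<Union>p. S p)" by blast
    qed
    show "(\<Union>p. S p) \<subseteq> U"
    proof
      fix z assume "z \<in> (\<Union>p. S p)"
      then obtain p r where "r \<in> R (fst p) (snd p)" "z \<in> G_set r q" unfolding S_def by blast
      moreover then have "1 < r" "r < q" using tj[of "snd p"] unfolding R_def by auto
      ultimately show "z \<in> U" unfolding U_def by auto
    qed
  qed
  have P1: "\<forall>r \<in> {1<..<q}. hausdorff_dim (G_set r q) = ereal (ln r / ln q)"
  proof
    fix r assume "r \<in> {1<..<q}"
    then show "hausdorff_dim (G_set r q) = ereal (ln r / ln q)" by (intro part1) auto
  qed
  have P2: "first_category U"
    unfolding first_category_def
  proof (intro exI[of _ "range S"] conjI)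
    show "countable (range S)" by simp
    show "\<forall>T\<in>range S. nowhere_dense T"
    proof
      fix T assume "T \<in> range S"
      then obtain p where "T = S p" by blast
      then show "nowhere_dense T" using null_nowhere[OF NS[of p]] by simp
    qed
    show "U = \<Union> (range S)" using US by simp
  qed
  have P3: "U \<in> null_sets lebesgue"
  proof -
    have "(\<Union>p. closure (S p)) \<in> null_sets lborel" by (rule null_sets_UN) (rule NS)
    then have "(\<Union>p. closure (S p)) \<in> null_sets lebesgue" by (rule null_sets_completionI)
    moreover have "U \<subseteq> (\<Union>p. closure (S p))"
    proof
      fix z assume "z \<in> U"
      then obtain p where "z \<in> S p" using US by blast
      then show "z \<in> (\<Union>p. closure (S p))" using closure_subset[of "S p"] by blast
    qed
    ultimately show ?thesis by (rule null_sets_completion_subset[rotated])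
  qed
  have P4: "hausdorff_dim U = 1"
  proof -
    have "hausdorff_dim U = ereal 1"
    proof (rule dim_eq)
      show "0 \<le> (1::real)" by simp
      show "hausdorff_measure s U \<noteq> 0" if s: "0 \<le> s" "s < 1" for s
      proof -
        obtain s' :: real where s'': "s < s'" "s' < 1" using dense s(2) by blast
        have s'1: "0 < s'" using s(1) s''(1) by linarith
        have s'3: "s \<le> s'" using s''(1) by linarith
        note s' = s'1 s''(2) s'3
        define r where "r = q powr s'"
        have "q powr 0 < q powr s'" by (rule powr_less_mono[OF s'(1) q])
        moreover have "q powr s' < q powr 1" by (rule powr_less_mono[OF s'(2) q])
        moreover have "q powr 0 = 1" "q powr 1 = q" using q by auto
        ultimately have r: "1 < r" "r < q" unfolding r_def by linarith+
        have lnq: "0 < ln q" using q by simp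
        have "ln r = s' * ln q" unfolding r_def by (rule ln_powr)
        then have lr: "ln r / ln q = s'" using lnq by simp
        have sub: "G_set r q \<subseteq> U" unfolding U_def by (rule UN_upper) (use r in simp)
        show ?thesis by (rule hm_pos_lower[OF r sub s(1)]) (simp add: lr s'(3))
      qed
      show "hausdorff_measure s U = 0" if s: "1 < s" for s
      proof (rule hm_interval_zero[OF s])
        show "U \<subseteq> {0..real (cd q) / (q - 1)}"
        proof
          fix z assume "z \<in> U"
          then obtain r x where r: "1 < r" "r < q" "x \<in> greedy_interval r" "z = FF q r x"
            unfolding U_def G_set_FF by auto
          have x0: "0 \<le> x" using r(3) unfolding greedy_interval_def by auto
          have b: "V q r x 0 \<le> FF q r x" "FF q r x \<le> V q r x 0 + real (cd r) / ((q - 1) * q ^ 0)"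
            using FF_bounds[OF q x0, of r 0] by auto
          have "cd r \<le> cd q" unfolding cd_def using r(2) by (intro diff_le_mono nat_mono ceiling_mono) simp
          then have "real (cd r) / (q - 1) \<le> real (cd q) / (q - 1)" using q by (intro divide_right_mono) auto
          then show "z \<in> {0..real (cd q) / (q - 1)}" using b r(4) by (simp add: V_def)
        qed
      qed
    qed
    then show ?thesis by simp
  qed
  show ?thesis unfolding U_def[symmetric] by (intro conjI P1 P2 P3 P4)
qed

end
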